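(* Let $F$ be a number field, $D$ a quaternion $F$-algebra, $\mathcal O$ an $O_F$-order in $D$, $K$ a maximal subfield of $D$, and $B=K\cap\mathcal O$. Let $\mathfrak b$ be a locally principal integral ideal of $B$. Then $\mathfrak b$ is a primitive $B$-ideal if and only if $\mathfrak b\mathcal O$ is a primitive right $\mathcal O$-ideal.
   Context: For an $O_F$-order $\Lambda$ in a simple $F$-algebra and a finite place $\mathfrak p$, a fractional right $\Lambda_{\mathfrak p}$-ideal is primitive if it is integral, principal, and not contained in $\mathfrak p\Lambda_{\mathfrak p}$; a fractional right $\Lambda$-ideal $L$ is primitive if $L_{\mathfrak p}$ is primitive for every finite place $\mathfrak p$. *)

theory Defs
  imports Main
begin

text \<open>Ambient setting: the quaternion algebra D is the whole carrier of a type
  'a of class ring_1; the number field F, its ring of integers, orders, lattices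
  and ideals are subsets of this type.\<close>

definition subfield :: "'a::ring_1 set \<Rightarrow> bool" where
  "subfield S \<longleftrightarrow> (0::'a) \<noteq> 1 \<and> 0 \<in> S \<and> 1 \<in> S \<and>
     (\<forall>x\<in>S. \<forall>y\<in>S. x + y \<in> S \<and> x - y \<in> S \<and> x * y \<in> S \<and> x * y = y * x) \<and>
     (\<forall>x\<in>S. x \<noteq> 0 \<longrightarrow> (\<exists>y\<in>S. x * y = 1))"

definition number_field :: "'a::ring_1 set \<Rightarrow> bool" where
  "number_field F \<longleftrightarrow> subfield F \<and> (\<forall>n::nat. n > 0 \<longrightarrow> of_nat n \<noteq> (0::'a)) \<and>
     (\<exists>S. finite S \<and> S \<subseteq> F \<and>
        (\<forall>x\<in>F. \<exists>n::int. n \<noteq> 0 \<and> (\<exists>c::'a \<Rightarrow> int. of_int n * x = (\<Sum>s\<in>S. of_int (c s) * s))))"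

definition ring_of_integers :: "'a::ring_1 set \<Rightarrow> 'a set" where
  "ring_of_integers F = {x \<in> F. \<exists>(n::nat) (c::nat \<Rightarrow> int). x ^ n + (\<Sum>i<n. of_int (c i) * x ^ i) = 0}"

definition finite_place :: "'a::ring_1 set \<Rightarrow> 'a set \<Rightarrow> bool" where
  "finite_place F p \<longleftrightarrow> p \<subseteq> ring_of_integers F \<and> 0 \<in> p \<and>
     (\<forall>x\<in>p. \<forall>y\<in>p. x + y \<in> p) \<and> (\<forall>a\<in>ring_of_integers F. \<forall>x\<in>p. a * x \<in> p) \<and>
     p \<noteq> {0} \<and> p \<noteq> ring_of_integers F \<and>
     (\<forall>a\<in>ring_of_integers F. \<forall>b\<in>ring_of_integers F. a * b \<in> p \<longrightarrow> a \<in> p \<or> b \<in> p)"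

definition loc :: "'a::ring_1 set \<Rightarrow> 'a set \<Rightarrow> 'a set \<Rightarrow> 'a set" where
  "loc F p X = {y. \<exists>s \<in> ring_of_integers F - p. s * y \<in> X}"

definition setmul :: "'a::ring_1 set \<Rightarrow> 'a set \<Rightarrow> 'a set" where
  "setmul X Y = {x * y | x y. x \<in> X \<and> y \<in> Y}"

definition addgen :: "'a::ring_1 set \<Rightarrow> 'a set" where
  "addgen X = {sum_list xs | xs. set xs \<subseteq> X}"

definition iprod :: "'a::ring_1 set \<Rightarrow> 'a set \<Rightarrow> 'a set" where
  "iprod X Y = addgen (setmul X Y)"

definition lattice :: "'a::ring_1 set \<Rightarrow> 'a set \<Rightarrow> 'a set \<Rightarrow> bool" where
  "lattice F V L \<longleftrightarrow> L \<subseteq> V \<and> 0 \<in> L \<and> (\<forall>x\<in>L. \<forall>y\<in>L. x + y \<in> L) \<and>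
     (\<forall>a\<in>ring_of_integers F. \<forall>x\<in>L. a * x \<in> L) \<and>
     (\<exists>G. finite G \<and> G \<subseteq> L \<and>
        (\<forall>x\<in>L. \<exists>c. (\<forall>g\<in>G. c g \<in> ring_of_integers F) \<and> x = (\<Sum>g\<in>G. c g * g))) \<and>
     (\<forall>v\<in>V. \<exists>n::int. n \<noteq> 0 \<and> of_int n * v \<in> L)"

definition is_order :: "'a::ring_1 set \<Rightarrow> 'a set \<Rightarrow> 'a set \<Rightarrow> bool" where
  "is_order F A \<Lambda> \<longleftrightarrow> lattice F A \<Lambda> \<and> 1 \<in> \<Lambda> \<and> (\<forall>x\<in>\<Lambda>. \<forall>y\<in>\<Lambda>. x * y \<in> \<Lambda>)"

definition frac_right_ideal :: "'a::ring_1 set \<Rightarrow> 'a set \<Rightarrow> 'a set \<Rightarrow> 'a set \<Rightarrow> bool" where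
  "frac_right_ideal F A \<Lambda> L \<longleftrightarrow> lattice F A L \<and> setmul L \<Lambda> \<subseteq> L"

definition locally_principal :: "'a::ring_1 set \<Rightarrow> 'a set \<Rightarrow> 'a set \<Rightarrow> 'a set \<Rightarrow> bool" where
  "locally_principal F A \<Lambda> L \<longleftrightarrow>
     (\<forall>p. finite_place F p \<longrightarrow> (\<exists>x\<in>A. loc F p L = setmul {x} (loc F p \<Lambda>)))"

definition loc_primitive :: "'a::ring_1 set \<Rightarrow> 'a set \<Rightarrow> 'a set \<Rightarrow> 'a set \<Rightarrow> 'a set \<Rightarrow> bool" where
  "loc_primitive F A p \<Lambda> L \<longleftrightarrow>
     loc F p L \<subseteq> loc F p \<Lambda> \<and>
     (\<exists>x\<in>A. loc F p L = setmul {x} (loc F p \<Lambda>)) \<and>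
     \<not> (loc F p L \<subseteq> iprod p (loc F p \<Lambda>))"

definition primitive :: "'a::ring_1 set \<Rightarrow> 'a set \<Rightarrow> 'a set \<Rightarrow> 'a set \<Rightarrow> bool" where
  "primitive F A \<Lambda> L \<longleftrightarrow> frac_right_ideal F A \<Lambda> L \<and>
     (\<forall>p. finite_place F p \<longrightarrow> loc_primitive F A p \<Lambda> L)"

definition center :: "'a::ring_1 set" where
  "center = {z. \<forall>y. z * y = y * z}"

definition quaternion_algebra :: "'a::ring_1 set \<Rightarrow> bool" where
  "quaternion_algebra F \<longleftrightarrow> center = F \<and>
     (\<forall>I::'a set. (0 \<in> I \<and> (\<forall>x\<in>I. \<forall>y\<in>I. x - y \<in> I) \<and> (\<forall>x\<in>I. \<forall>y. x * y \<in> I \<and> y * x \<in> I))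
        \<longrightarrow> I = {0} \<or> I = UNIV) \<and>
     (\<exists>e::nat \<Rightarrow> 'a.
        (\<forall>c. (\<forall>i<4. c i \<in> F) \<and> (\<Sum>i<4. c i * e i) = 0 \<longrightarrow> (\<forall>i<4. c i = 0)) \<and>
        (\<forall>x. \<exists>c. (\<forall>i<4. c i \<in> F) \<and> x = (\<Sum>i<4. c i * e i)))"

definition maximal_subfield :: "'a::ring_1 set \<Rightarrow> 'a set \<Rightarrow> bool" where
  "maximal_subfield F K \<longleftrightarrow> subfield K \<and> F \<subseteq> K \<and>
     (\<forall>K'. subfield K' \<and> K \<subseteq> K' \<longrightarrow> K' = K)"

end

theory Submission
  imports Defs "Jordan_Normal_Form.Char_Poly"
begin

inductive_set zspan :: "'a::ring_1 set \<Rightarrow> 'a set" for G where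
  zs_base: "g \<in> G \<Longrightarrow> g \<in> zspan G"
| zs_zero: "0 \<in> zspan G"
| zs_diff: "x \<in> zspan G \<Longrightarrow> y \<in> zspan G \<Longrightarrow> x - y \<in> zspan G"

lemma zs_uminus: "x \<in> zspan G \<Longrightarrow> - x \<in> zspan G"
  using zs_diff[OF zs_zero, of x G] by simp

lemma zs_add: "x \<in> zspan G \<Longrightarrow> y \<in> zspan G \<Longrightarrow> x + y \<in> zspan G"
  using zs_diff[of x G "- y"] zs_uminus[of y G] by simp

lemma zs_sum: "(\<And>i. i \<in> I \<Longrightarrow> f i \<in> zspan G) \<Longrightarrow> sum f I \<in> zspan G"
  by (induction I rule: infinite_finite_induct) (auto intro: zs_add zs_zero)

lemma zs_of_nat_mult: "x \<in> zspan G \<Longrightarrow> of_nat n * x \<in> zspan G"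
  by (induction n) (auto simp: distrib_right intro: zs_add zs_zero)

lemma zs_of_int_mult: assumes "x \<in> zspan G" shows "of_int m * x \<in> zspan G"
proof -
  have "of_int m = (of_nat (nat m) - of_nat (nat (-m)) :: 'a)" by (cases "m \<ge> 0") simp_all
  then have "of_int m * x = of_nat (nat m) * x - of_nat (nat (-m)) * x" by (simp add: left_diff_distrib)
  then show ?thesis using zs_diff zs_of_nat_mult assms by metis
qed

lemma zs_subset: assumes "G \<subseteq> zspan H" "x \<in> zspan G" shows "x \<in> zspan H"
  using assms(2) by (induction rule: zspan.induct) (use assms(1) in \<open>auto intro: zs_diff zs_zero\<close>)

lemma zs_lmult: assumes "\<And>g. g \<in> G \<Longrightarrow> y * g \<in> zspan H" "x \<in> zspan G" shows "y * x \<in> zspan H"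
  using assms(2) by (induction rule: zspan.induct) (use assms(1) in \<open>auto simp: right_diff_distrib intro: zs_diff zs_zero\<close>)

lemma zs_rmult: assumes "\<And>g. g \<in> G \<Longrightarrow> g * y \<in> zspan H" "x \<in> zspan G" shows "x * y \<in> zspan H"
  using assms(2) by (induction rule: zspan.induct) (use assms(1) in \<open>auto simp: left_diff_distrib intro: zs_diff zs_zero\<close>)

lemma zs_closed:
  assumes "0 \<in> S" "\<And>x y. x \<in> S \<Longrightarrow> y \<in> S \<Longrightarrow> x - y \<in> S" "G \<subseteq> S"
  shows "x \<in> zspan G \<Longrightarrow> x \<in> S"
  by (induction rule: zspan.induct) (use assms in auto)

lemma zs_repr:
  assumes "finite G" "x \<in> zspan G"
  shows "\<exists>c. x = (\<Sum>g\<in>G. of_int (c g) * g)"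
  using assms(2)
proof (induction rule: zspan.induct)
  case (zs_base g)
  show ?case
  proof (rule exI[of _ "\<lambda>h. if h = g then 1 else 0"])
    have "(\<Sum>h\<in>G. of_int (if h = g then 1 else 0) * h) = (\<Sum>h\<in>G. if h = g then h else 0)"
      by (rule sum.cong) auto
    also have "\<dots> = g" using sum.delta[OF assms(1), of g "\<lambda>h. h"] zs_base by simp
    finally show "g = (\<Sum>h\<in>G. of_int (if h = g then 1 else 0) * h)" by simp
  qed
next
  case zs_zero
  show ?case by (rule exI[of _ "\<lambda>_. 0"]) simp
next
  case (zs_diff x y)
  then obtain c d where "x = (\<Sum>g\<in>G. of_int (c g) * g)" "y = (\<Sum>g\<in>G. of_int (d g) * g)" by blast
  then show ?case
    by (intro exI[of _ "\<lambda>g. c g - d g"]) (simp add: sum_subtractf left_diff_distrib)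
qed

definition ev :: "int poly \<Rightarrow> 'a::ring_1 \<Rightarrow> 'a" where
  "ev p x = fold_coeffs (\<lambda>a r. of_int a + x * r) p 0"

lemma ev_0[simp]: "ev 0 x = 0" by (simp add: ev_def)

lemma ev_pCons[simp]: "ev (pCons a p) x = of_int a + x * ev p x"
  by (cases "p = 0 \<and> a = 0") (auto simp add: ev_def)

lemma ev_add[simp]: "ev (p + q) x = ev p x + ev q x"
proof (induct p arbitrary: q)
  case (pCons a p)
  then show ?case by (cases q) (simp add: algebra_simps)
qed simp

lemma ev_minus[simp]: "ev (- p) x = - ev p x"
  by (induct p) (simp_all add: algebra_simps)

lemma ev_diff[simp]: "ev (p - q) x = ev p x - ev q x"
  using ev_add[of p "- q" x] by simp

lemma ev_smult[simp]: "ev (Polynomial.smult a p) x = of_int a * ev p x"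
proof (induct p)
  case (pCons b p)
  have "x * (of_int a * ev p x) = of_int a * (x * ev p x)" by (metis mult.assoc mult_of_int_commute)
  then show ?case using pCons by (simp add: distrib_left)
qed simp

lemma ev_mult[simp]: "ev (p * q) x = ev p x * ev q x"
proof (induct p)
  case (pCons a p)
  then show ?case by (simp add: mult_pCons_left distrib_right mult.assoc)
qed simp

lemma ev_const[simp]: "ev [:c:] x = of_int c" by simp

lemma ev_1[simp]: "ev 1 x = 1" by (simp add: one_pCons)

lemma ev_sum: "ev (\<Sum>i\<in>I. f i) x = (\<Sum>i\<in>I. ev (f i) x)"
  by (induction I rule: infinite_finite_induct) simp_all

lemma ev_sum_coeffs: "degree p < N \<Longrightarrow> ev p x = (\<Sum>i<N. of_int (coeff p i) * x ^ i)"
proof (induct p arbitrary: N)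
  case 0
  then show ?case by simp
next
  case (pCons a p)
  from pCons.prems obtain M where N: "N = Suc M" by (cases N) auto
  have IH: "ev p x = (\<Sum>i<M. of_int (coeff p i) * x ^ i)"
  proof (cases "p = 0")
    case True then show ?thesis by simp
  next
    case False
    then show ?thesis using pCons.prems N by (intro pCons.hyps) simp
  qed
  have "(\<Sum>i<N. of_int (coeff (pCons a p) i) * x ^ i) = of_int a + (\<Sum>i<M. of_int (coeff p i) * x ^ Suc i)"
    unfolding N sum.lessThan_Suc_shift by simp
  also have "(\<Sum>i<M. of_int (coeff p i) * x ^ Suc i) = x * (\<Sum>i<M. of_int (coeff p i) * x ^ i)"
  proof -
    have "\<And>i. of_int (coeff p i) * x ^ Suc i = x * (of_int (coeff p i) * x ^ i)"
      by (metis mult.assoc mult_of_int_commute power_Suc)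
    then show ?thesis unfolding sum_distrib_left by simp
  qed
  finally show ?case using IH by simp
qed

lemma sum_set_nth:
  assumes "distinct gs"
  shows "(\<Sum>g\<in>set gs. f g) = (\<Sum>j<length gs. f (gs ! j))"
proof -
  have "(\<Sum>g\<in>set gs. f g) = sum_list (map f gs)" using sum.distinct_set_conv_list[OF assms] by simp
  also have "\<dots> = (\<Sum>j = 0..<length gs. f (gs ! j))" by (simp add: sum_list_sum_nth)
  finally show ?thesis by (simp add: atLeast0LessThan)
qed

lemma CH:
  fixes x :: "'a::ring_1"
  assumes fin: "finite G" and cl: "\<And>g. g \<in> G \<Longrightarrow> x * g \<in> zspan G"
  shows "\<exists>n c. \<forall>y\<in>zspan G. (x ^ n + (\<Sum>i<n. of_int (c i) * x ^ i)) * y = 0"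
proof -
  obtain gs where gs: "set gs = G" "distinct gs" using finite_distinct_list[OF fin] by blast
  define m where "m = length gs"
  have reidx: "\<And>f. (\<Sum>g\<in>G. f g) = (\<Sum>j<m. f (gs ! j))"
    using sum_set_nth[OF gs(2)] gs(1) m_def by simp
  have "\<forall>i<m. \<exists>c. x * gs ! i = (\<Sum>g\<in>G. of_int (c g) * g)"
    using cl zs_repr[OF fin] gs by (auto simp: m_def)
  then obtain C where C: "\<And>i. i < m \<Longrightarrow> x * gs ! i = (\<Sum>g\<in>G. of_int (C i g) * g)" by metis
  define A :: "int mat" where "A = mat m m (\<lambda>(i,j). C i (gs ! j))"
  have A: "A \<in> carrier_mat m m" by (simp add: A_def)
  have xg: "\<And>i. i < m \<Longrightarrow> x * gs ! i = (\<Sum>j<m. of_int (A $$ (i,j)) * gs ! j)"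
    using C reidx by (simp add: A_def)
  define B where "B = char_poly_matrix A"
  have B: "B \<in> carrier_mat m m" using A by (simp add: B_def)
  have Bij: "\<And>j k. j < m \<Longrightarrow> k < m \<Longrightarrow> ev (B $$ (j,k)) x = (if j = k then x else 0) - of_int (A $$ (j,k))"
    using A by (simp add: B_def char_poly_matrix_def)
  have key1: "\<And>j. j < m \<Longrightarrow> (\<Sum>k<m. ev (B $$ (j,k)) x * gs ! k) = 0"
  proof -
    fix j assume j: "j < m"
    have "(\<Sum>k<m. ev (B $$ (j,k)) x * gs ! k) = (\<Sum>k<m. (if j = k then x * gs ! k else 0) - of_int (A $$ (j,k)) * gs ! k)"
      by (rule sum.cong) (simp_all add: Bij j left_diff_distrib)
    also have "\<dots> = x * gs ! j - x * gs ! j"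
      using j xg[OF j] by (simp add: sum_subtractf)
    finally show "(\<Sum>k<m. ev (B $$ (j,k)) x * gs ! k) = 0" by simp
  qed
  define \<chi> where "\<chi> = char_poly A"
  have adj: "adj_mat B * B = \<chi> \<cdot>\<^sub>m 1\<^sub>m m" using adj_mat(3)[OF B] by (simp add: \<chi>_def char_poly_def B_def)
  have adjC: "adj_mat B \<in> carrier_mat m m" using adj_mat(1)[OF B] .
  have entry: "\<And>i k. i < m \<Longrightarrow> k < m \<Longrightarrow> (\<Sum>j<m. adj_mat B $$ (i,j) * B $$ (j,k)) = (if i = k then \<chi> else 0)"
  proof -
    fix i k assume ik: "i < m" "k < m"
    have "(adj_mat B * B) $$ (i,k) = (\<Sum>j<m. adj_mat B $$ (i,j) * B $$ (j,k))"
      using ik adjC B by (simp add: scalar_prod_def atLeast0LessThan)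
    then show "(\<Sum>j<m. adj_mat B $$ (i,j) * B $$ (j,k)) = (if i = k then \<chi> else 0)"
      using adj ik by (cases "i = k") auto
  qed
  have key2: "\<And>i. i < m \<Longrightarrow> ev \<chi> x * gs ! i = 0"
  proof -
    fix i assume i: "i < m"
    have "(\<Sum>k<m. ev (if i = k then \<chi> else 0) x * gs ! k) = (\<Sum>k<m. if i = k then ev \<chi> x * gs ! k else 0)"
      by (rule sum.cong) auto
    also have "\<dots> = ev \<chi> x * gs ! i" using i by (simp add: sum.delta)
    finally have "ev \<chi> x * gs ! i = (\<Sum>k<m. ev (if i = k then \<chi> else 0) x * gs ! k)" by simp
    also have "\<dots> = (\<Sum>k<m. (\<Sum>j<m. ev (adj_mat B $$ (i,j)) x * ev (B $$ (j,k)) x) * gs ! k)"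
      by (rule sum.cong) (simp_all add: entry[OF i, symmetric] ev_sum)
    also have "\<dots> = (\<Sum>k<m. \<Sum>j<m. ev (adj_mat B $$ (i,j)) x * ev (B $$ (j,k)) x * gs ! k)"
      by (simp add: sum_distrib_right)
    also have "\<dots> = (\<Sum>j<m. \<Sum>k<m. ev (adj_mat B $$ (i,j)) x * ev (B $$ (j,k)) x * gs ! k)"
      by (rule sum.swap)
    also have "\<dots> = (\<Sum>j<m. ev (adj_mat B $$ (i,j)) x * (\<Sum>k<m. ev (B $$ (j,k)) x * gs ! k))"
      by (simp add: sum_distrib_left mult.assoc)
    also have "\<dots> = 0" by (simp add: key1)
    finally show "ev \<chi> x * gs ! i = 0" .
  qed
  have zero: "\<forall>y\<in>zspan G. ev \<chi> x * y = 0"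
  proof
    fix y assume "y \<in> zspan G"
    have "y \<in> {y. ev \<chi> x * y = 0}"
      by (rule zs_closed[OF _ _ _ \<open>y \<in> zspan G\<close>]) (use key2 gs in \<open>auto simp: m_def in_set_conv_nth right_diff_distrib\<close>)
    then show "ev \<chi> x * y = 0" by simp
  qed
  have dm: "degree \<chi> = m" "coeff \<chi> m = 1" using degree_monic_char_poly[OF A] by (simp_all add: \<chi>_def)
  have "ev \<chi> x = (\<Sum>i<Suc m. of_int (coeff \<chi> i) * x ^ i)" using dm by (intro ev_sum_coeffs) simp
  also have "\<dots> = x ^ m + (\<Sum>i<m. of_int (coeff \<chi> i) * x ^ i)" using dm by (simp add: add.commute)
  finally show ?thesis using zero by (intro exI[of _ m] exI[of _ "coeff \<chi>"]) simp
qed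

definition integral :: "'a::ring_1 \<Rightarrow> bool" where
  "integral x \<longleftrightarrow> (\<exists>n c. x ^ n + (\<Sum>i<n. of_int (c i) * x ^ i) = 0)"

locale nf =
  fixes F :: "'a::ring_1 set"
  assumes nfF: "number_field F" and cenF: "F \<subseteq> center"
begin

lemma subF: "subfield F" using nfF by (simp add: number_field_def)

lemma F0[simp,intro]: "0 \<in> F" and F1[simp,intro]: "1 \<in> F" and zero_neq_one': "(0::'a) \<noteq> 1"
  using subF by (auto simp: subfield_def)

lemma Fdiff[intro]: "x \<in> F \<Longrightarrow> y \<in> F \<Longrightarrow> x - y \<in> F"
  and Fadd[intro]: "x \<in> F \<Longrightarrow> y \<in> F \<Longrightarrow> x + y \<in> F"
  and Fmult[intro]: "x \<in> F \<Longrightarrow> y \<in> F \<Longrightarrow> x * y \<in> F"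
  using subF by (auto simp: subfield_def)

lemma Fuminus[intro]: "x \<in> F \<Longrightarrow> - x \<in> F" using Fdiff[of 0 x] by simp

lemma Fcomm: "x \<in> F \<Longrightarrow> x * y = y * x" using cenF by (auto simp: center_def)

lemma Finv: assumes "x \<in> F" "x \<noteq> 0" shows "\<exists>y\<in>F. x * y = 1 \<and> y * x = 1"
proof -
  have "\<exists>y\<in>F. x * y = 1" using subF assms unfolding subfield_def by blast
  then obtain y where "y \<in> F" "x * y = 1" by blast
  moreover have "y * x = x * y" using Fcomm[OF assms(1)] by simp
  ultimately show ?thesis by auto
qed

lemma Fcancel: assumes "x \<in> F" "x \<noteq> 0" "x * z = 0" shows "z = 0"
proof -
  obtain y where "y * x = 1" using Finv assms by blast
  then have "z = y * (x * z)" by (simp add: mult.assoc[symmetric])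
  then show ?thesis using assms by simp
qed

lemma Fpow[intro]: "x \<in> F \<Longrightarrow> x ^ n \<in> F" by (induction n) auto

lemma Fsum[intro]: "(\<And>i. i \<in> I \<Longrightarrow> f i \<in> F) \<Longrightarrow> sum f I \<in> F"
  by (induction I rule: infinite_finite_induct) auto

lemma Fof_nat[intro]: "of_nat n \<in> F" by (induction n) auto

lemma Fof_int[intro]: "of_int n \<in> F"
proof -
  have "(of_int n :: 'a) = of_nat (nat n) - of_nat (nat (-n))" by (cases "n \<ge> 0") simp_all
  then show ?thesis by auto
qed

lemma of_int_nz: assumes "n \<noteq> 0" shows "(of_int n :: 'a) \<noteq> 0"
proof -
  have ch: "\<And>k::nat. k > 0 \<Longrightarrow> (of_nat k :: 'a) \<noteq> 0" using nfF by (auto simp: number_field_def)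
  show ?thesis
  proof (cases "n > 0")
    case True then show ?thesis using ch[of "nat n"] by simp
  next
    case False then have "-n > 0" using assms by simp
    then have "(of_int (-n)::'a) \<noteq> 0" using ch[of "nat (-n)"] by simp
    then show ?thesis by (metis of_int_minus neg_equal_0_iff_equal)
  qed
qed

lemma OF_def': "ring_of_integers F = {x\<in>F. integral x}"
  by (simp add: ring_of_integers_def integral_def)

lemma OF_F: "x \<in> ring_of_integers F \<Longrightarrow> x \<in> F" by (simp add: OF_def')

definition zring :: "'a set \<Rightarrow> bool" where
  "zring G \<longleftrightarrow> finite G \<and> G \<subseteq> F \<and> 1 \<in> zspan G \<and> (\<forall>g\<in>G. \<forall>h\<in>G. g * h \<in> zspan G)"

lemma zspan_F: "G \<subseteq> F \<Longrightarrow> x \<in> zspan G \<Longrightarrow> x \<in> F"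
  by (rule zs_closed[of F]) auto

lemma zring_mult: assumes "zring G" "x \<in> zspan G" "y \<in> zspan G" shows "x * y \<in> zspan G"
proof (rule zs_rmult[OF _ assms(2)])
  fix g assume g: "g \<in> G"
  show "g * y \<in> zspan G"
    by (rule zs_lmult[OF _ assms(3)]) (use assms(1) g in \<open>auto simp: zring_def\<close>)
qed

lemma zring_integral: assumes "zring G" "x \<in> zspan G" shows "integral x"
proof -
  have cl: "\<And>g. g \<in> G \<Longrightarrow> x * g \<in> zspan G" using zring_mult[OF assms(1,2)] zs_base by blast
  have fin: "finite G" using assms(1) by (simp add: zring_def)
  obtain n c where "\<forall>y\<in>zspan G. (x ^ n + (\<Sum>i<n. of_int (c i) * x ^ i)) * y = 0"
    using CH[OF fin cl] by blast
  then have "(x ^ n + (\<Sum>i<n. of_int (c i) * x ^ i)) * 1 = 0" using assms(1) by (auto simp: zring_def)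
  then show ?thesis unfolding integral_def by auto
qed

lemma zring_one: "zring {1}"
  unfolding zring_def using zs_base[of 1 "{1}"] by simp

lemma tower:
  assumes G: "zring G" and z: "z \<in> F" and rel: "z ^ d = (\<Sum>j<d. f j * z ^ j)"
    and f: "\<And>j. j < d \<Longrightarrow> f j \<in> zspan G"
  shows "\<exists>G'. zring G' \<and> zspan G \<subseteq> zspan G' \<and> z \<in> zspan G'"
proof -
  have d: "d > 0" using rel zero_neq_one' by (cases d) auto
  define G' where "G' = (\<lambda>(g,j). g * z ^ j) ` (G \<times> {..<d})"
  have GF: "G \<subseteq> F" using G by (simp add: zring_def)
  have P: "\<forall>x\<in>zspan G. x * z ^ k \<in> zspan G'" for k
  proof (induction k rule: less_induct)
    case (less k)
    show ?case
    proof
      fix x assume x: "x \<in> zspan G"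
      show "x * z ^ k \<in> zspan G'"
      proof (cases "k < d")
        case True
        show ?thesis
          by (rule zs_rmult[OF _ x]) (use True in \<open>auto simp: G'_def intro!: zs_base\<close>)
      next
        case False
        have "x * z ^ k = x * z ^ d * z ^ (k - d)"
          using False by (simp add: mult.assoc power_add[symmetric])
        also have "\<dots> = (\<Sum>j<d. (x * f j) * z ^ (j + (k - d)))"
          unfolding rel by (simp add: sum_distrib_left sum_distrib_right mult.assoc power_add)
        also have "\<dots> \<in> zspan G'"
        proof (rule zs_sum)
          fix j assume "j \<in> {..<d}"
          then have "j + (k - d) < k" "x * f j \<in> zspan G" using False d zring_mult[OF G x f] by auto
          then show "x * f j * z ^ (j + (k - d)) \<in> zspan G'" using less by blast
        qed
        finally show ?thesis .
      qed
    qed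
  qed
  have one: "1 \<in> zspan G" using G by (simp add: zring_def)
  have sub: "zspan G \<subseteq> zspan G'" using P[of 0] by auto
  have "zring G'"
    unfolding zring_def
  proof (intro conjI ballI)
    show "finite G'" using G by (simp add: G'_def zring_def)
    show "G' \<subseteq> F" using GF z by (auto simp: G'_def)
    show "1 \<in> zspan G'" using sub one by auto
    fix a b assume "a \<in> G'" "b \<in> G'"
    then obtain g i h j where ab: "g \<in> G" "h \<in> G" "a = g * z ^ i" "b = h * z ^ j"
      by (auto simp: G'_def)
    have "h * z ^ i = z ^ i * h" using Fcomm ab(2) GF by blast
    then have "a * b = (g * h) * z ^ (i + j)" using ab by (simp add: mult.assoc power_add) (metis mult.assoc)
    moreover have "g * h \<in> zspan G" using G ab by (simp add: zring_def)
    ultimately show "a * b \<in> zspan G'" using P by auto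
  qed
  moreover have "z \<in> zspan G'" using P[of 1] one by auto
  ultimately show ?thesis using sub by blast
qed

lemma integral_tower:
  assumes "zring G" "z \<in> F" "integral z"
  shows "\<exists>G'. zring G' \<and> zspan G \<subseteq> zspan G' \<and> z \<in> zspan G'"
proof -
  obtain n c where nc: "z ^ n + (\<Sum>i<n. of_int (c i) * z ^ i) = 0" using assms(3) integral_def by blast
  then have r: "z ^ n = (\<Sum>i<n. of_int (- c i) * z ^ i)"
    by (simp add: sum_negf eq_neg_iff_add_eq_0)
  have om: "\<And>m. of_int m \<in> zspan G" using zs_of_int_mult[of 1 G] assms(1) by (simp add: zring_def)
  have f: "\<And>j. j < n \<Longrightarrow> of_int (- c j) \<in> zspan G" using om by blast
  show ?thesis by (rule tower[OF assms(1,2) r f])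
qed

lemma OF_fin_zring:
  assumes "finite E" "E \<subseteq> ring_of_integers F"
  shows "\<exists>G. zring G \<and> E \<subseteq> zspan G"
  using assms
proof (induction E rule: finite_induct)
  case empty
  then show ?case using zring_one by blast
next
  case (insert e E)
  then obtain G where "zring G" "E \<subseteq> zspan G" by auto
  moreover have "e \<in> F" "integral e" using insert by (auto simp: OF_def')
  ultimately obtain G' where "zring G'" "zspan G \<subseteq> zspan G'" "e \<in> zspan G'"
    using integral_tower by blast
  then show ?case using \<open>E \<subseteq> zspan G\<close> by blast
qed

lemma OF_ops:
  assumes "x \<in> ring_of_integers F" "y \<in> ring_of_integers F"
  shows "x + y \<in> ring_of_integers F" "x * y \<in> ring_of_integers F" "x - y \<in> ring_of_integers F"
proof -
  obtain G where G: "zring G" "{x, y} \<subseteq> zspan G" using OF_fin_zring[of "{x,y}"] assms by auto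
  have F: "x \<in> F" "y \<in> F" using assms OF_F by auto
  show "x + y \<in> ring_of_integers F" using G F zring_integral[OF G(1) zs_add] by (auto simp: OF_def')
  show "x * y \<in> ring_of_integers F" using G F zring_integral[OF G(1) zring_mult[OF G(1)]] by (auto simp: OF_def')
  show "x - y \<in> ring_of_integers F" using G F zring_integral[OF G(1) zs_diff] by (auto simp: OF_def')
qed

lemma OF_of_int[intro]: "of_int n \<in> ring_of_integers F"
  using zring_integral[OF zring_one zs_of_int_mult[OF zs_base[of 1 "{1}"]], of n]
  by (auto simp: OF_def')

lemma OF_0[intro]: "0 \<in> ring_of_integers F" and OF_1[intro]: "1 \<in> ring_of_integers F"
  using OF_of_int[of 0] OF_of_int[of 1] by auto

lemma OF_pow: "x \<in> ring_of_integers F \<Longrightarrow> x ^ n \<in> ring_of_integers F"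
  by (induction n) (auto intro: OF_ops)

lemma OF_trans:
  assumes z: "z \<in> F" and rel: "z ^ n + (\<Sum>i<n. e i * z ^ i) = 0"
    and e: "\<And>i. i < n \<Longrightarrow> e i \<in> ring_of_integers F"
  shows "z \<in> ring_of_integers F"
proof -
  obtain G where G: "zring G" "e ` {..<n} \<subseteq> zspan G" using OF_fin_zring[of "e ` {..<n}"] e by auto
  have r: "z ^ n = (\<Sum>i<n. (- e i) * z ^ i)" using rel by (simp add: sum_negf eq_neg_iff_add_eq_0)
  have f: "\<And>j. j < n \<Longrightarrow> - e j \<in> zspan G" using G zs_uminus by blast
  obtain G' where "zring G'" "z \<in> zspan G'" using tower[OF G(1) z r f] by blast
  then show ?thesis using z zring_integral by (auto simp: OF_def')
qed

lemma F_denom: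
  assumes x: "x \<in> F" shows "\<exists>N. N \<noteq> 0 \<and> of_int N * x \<in> ring_of_integers F"
proof -
  obtain S where S: "finite S" "S \<subseteq> F"
    "\<And>y. y \<in> F \<Longrightarrow> \<exists>n::int. n \<noteq> 0 \<and> (\<exists>c::'a \<Rightarrow> int. of_int n * y = (\<Sum>s\<in>S. of_int (c s) * s))"
    using nfF unfolding number_field_def by blast
  have spn: "\<exists>n::int. n \<noteq> 0 \<and> of_int n * y \<in> zspan S" if yF: "y \<in> F" for y
  proof -
    obtain n c where "n \<noteq> 0" "of_int n * y = (\<Sum>s\<in>S. of_int (c s) * s)" using S(3)[OF yF] by blast
    moreover have "(\<Sum>s\<in>S. of_int (c s) * s) \<in> zspan S"
      by (intro zs_sum zs_of_int_mult zs_base)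
    ultimately show ?thesis by auto
  qed
  have "\<forall>s\<in>S. \<exists>n::int. n \<noteq> 0 \<and> of_int n * (x * s) \<in> zspan S" using spn x S(2) by blast
  then obtain nn where nn: "\<And>s. s \<in> S \<Longrightarrow> nn s \<noteq> 0 \<and> of_int (nn s) * (x * s) \<in> zspan S" by metis
  define N where "N = (\<Prod>s\<in>S. nn s)"
  have N0: "N \<noteq> 0" using nn S(1) by (simp add: N_def)
  have cl: "(of_int N * x) * s \<in> zspan S" if s: "s \<in> S" for s
  proof -
    have "N = nn s * (\<Prod>t\<in>S - {s}. nn t)" using S(1) s by (simp add: N_def prod.remove)
    then have "(of_int N :: 'a) = of_int (nn s) * of_int (\<Prod>t\<in>S - {s}. nn t)" by simp
    also have "\<dots> = of_int (\<Prod>t\<in>S - {s}. nn t) * of_int (nn s)" by (rule mult_of_int_commute)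
    finally have "(of_int N * x) * s = of_int (\<Prod>t\<in>S - {s}. nn t) * (of_int (nn s) * (x * s))"
      by (simp add: mult.assoc)
    then show ?thesis using zs_of_int_mult nn s by metis
  qed
  obtain n c where nc: "\<forall>y\<in>zspan S. ((of_int N * x) ^ n + (\<Sum>i<n. of_int (c i) * (of_int N * x) ^ i)) * y = 0"
    using CH[OF S(1) cl] by blast
  obtain m :: int where m: "m \<noteq> 0" "of_int m * 1 \<in> zspan S" using spn[of 1] by auto
  define w where "w = (of_int N * x) ^ n + (\<Sum>i<n. of_int (c i) * (of_int N * x) ^ i)"
  have "w * of_int m = 0" using nc m by (simp add: w_def)
  then have "of_int m * w = 0" by (simp add: mult_of_int_commute)
  then have "w = 0" using Fcancel[OF Fof_int of_int_nz[OF m(1)]] by blast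
  then have "integral (of_int N * x)" unfolding integral_def w_def by blast
  moreover have "of_int N * x \<in> F" using x by auto
  ultimately show ?thesis using N0 by (auto simp: OF_def')
qed

end

context nf
begin

lemma pow_central: assumes "c \<in> F" shows "(c * u) ^ n = c ^ n * u ^ n"
proof (induction n)
  case (Suc n)
  have "u * c ^ n = c ^ n * u" using Fcomm[OF Fpow[OF assms]] by simp
  then show ?case using Suc by (simp add: mult.assoc) (metis mult.assoc)
qed simp

end

locale place = nf +
  fixes p
  assumes fp: "finite_place F p"
begin

abbreviation "OF \<equiv> ring_of_integers F"
abbreviation "R \<equiv> loc F p OF"
abbreviation "P \<equiv> loc F p p"

lemma p_OF: "p \<subseteq> OF" and p0: "0 \<in> p" and p_add: "x \<in> p \<Longrightarrow> y \<in> p \<Longrightarrow> x + y \<in> p"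
  and p_abs: "a \<in> OF \<Longrightarrow> x \<in> p \<Longrightarrow> a * x \<in> p"
  and p_ne: "p \<noteq> OF"
  and p_prime: "a \<in> OF \<Longrightarrow> b \<in> OF \<Longrightarrow> a * b \<in> p \<Longrightarrow> a \<in> p \<or> b \<in> p"
  using fp unfolding finite_place_def by blast+

lemma p_uminus: "x \<in> p \<Longrightarrow> - x \<in> p"
  using p_abs[of "-1" x] OF_of_int[of "-1"] by simp

lemma p_diff: "x \<in> p \<Longrightarrow> y \<in> p \<Longrightarrow> x - y \<in> p"
  using p_add[of x "- y"] p_uminus[of y] by simp

lemma one_notin_p: "1 \<notin> p"
proof
  assume "1 \<in> p"
  then have "OF \<subseteq> p" using p_abs[of _ 1] by fastforce
  then show False using p_OF p_ne by blast
qed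

lemma S_mult: "s \<in> OF - p \<Longrightarrow> t \<in> OF - p \<Longrightarrow> s * t \<in> OF - p"
  using p_prime OF_ops by blast

lemma S_nz: "s \<in> OF - p \<Longrightarrow> s \<noteq> 0" using p0 by blast

lemma S_F: "s \<in> OF - p \<Longrightarrow> s \<in> F" using OF_F by blast

lemma loc_F: assumes "y \<in> loc F p X" "X \<subseteq> F" shows "y \<in> F"
proof -
  obtain s where s: "s \<in> OF - p" "s * y \<in> X" using assms(1) by (auto simp: loc_def)
  obtain si where si: "si \<in> F" "si * s = 1" using Finv[OF S_F[OF s(1)] S_nz[OF s(1)]] by blast
  have eq: "si * (s * y) = y" using si by (simp add: mult.assoc[symmetric])
  have "si * (s * y) \<in> F" using Fmult[OF si(1), of "s * y"] s assms(2) by auto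
  then show ?thesis unfolding eq .
qed

lemma R_F: "y \<in> R \<Longrightarrow> y \<in> F" using loc_F OF_F by blast

lemma OF_R: "x \<in> OF \<Longrightarrow> x \<in> R"
  unfolding loc_def using one_notin_p OF_1 by (intro CollectI bexI[of _ 1]) auto

lemma R_of_int: "of_int n \<in> R" using OF_R OF_of_int by blast

lemma R_ops:
  assumes "x \<in> R" "y \<in> R"
  shows "x + y \<in> R" "x * y \<in> R" "x - y \<in> R"
proof -
  obtain s where s: "s \<in> OF - p" "s * x \<in> OF" using assms(1) by (auto simp: loc_def)
  obtain t where t: "t \<in> OF - p" "t * y \<in> OF" using assms(2) by (auto simp: loc_def)
  have st: "s * t \<in> OF - p" using S_mult s t by blast
  have sF: "s \<in> F" and tF: "t \<in> F" using s t OF_F by auto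
  have e1: "(s * t) * (x + y) = t * (s * x) + s * (t * y)"
    using Fcomm[OF tF, of s] Fcomm[OF tF, of x] by (simp add: distrib_left mult.assoc) (metis mult.assoc)
  have e2: "(s * t) * (x * y) = (s * x) * (t * y)"
    using Fcomm[OF tF, of x] by (simp add: mult.assoc) (metis mult.assoc)
  have e3: "(s * t) * (x - y) = t * (s * x) - s * (t * y)"
    using Fcomm[OF tF, of s] Fcomm[OF tF, of x] by (simp add: right_diff_distrib mult.assoc) (metis mult.assoc)
  have sO: "s \<in> OF" and tO: "t \<in> OF" using s t by auto
  have a: "t * (s * x) \<in> OF" "s * (t * y) \<in> OF" using OF_ops(2)[OF tO s(2)] OF_ops(2)[OF sO t(2)] by auto
  have "(s * t) * (x + y) \<in> OF" unfolding e1 using OF_ops(1)[OF a] .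
  then show "x + y \<in> R" unfolding loc_def using st by blast
  have "(s * t) * (x * y) \<in> OF" unfolding e2 using OF_ops(2)[OF s(2) t(2)] .
  then show "x * y \<in> R" unfolding loc_def using st by blast
  have "(s * t) * (x - y) \<in> OF" unfolding e3 using OF_ops(3)[OF a] .
  then show "x - y \<in> R" unfolding loc_def using st by blast
qed

lemma R_pow: "x \<in> R \<Longrightarrow> x ^ n \<in> R"
  by (induction n) (auto intro: R_ops OF_R)

lemma R_sum: "(\<And>i. i \<in> I \<Longrightarrow> f i \<in> R) \<Longrightarrow> sum f I \<in> R"
  by (induction I rule: infinite_finite_induct) (auto intro: R_ops OF_R)

lemma P_R: "x \<in> P \<Longrightarrow> x \<in> R" using p_OF by (auto simp: loc_def)

lemma one_notin_P: "1 \<notin> P" by (auto simp: loc_def)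

lemma P_diff: assumes "x \<in> P" "y \<in> P" shows "x - y \<in> P"
proof -
  obtain s where s: "s \<in> OF - p" "s * x \<in> p" using assms(1) by (auto simp: loc_def)
  obtain t where t: "t \<in> OF - p" "t * y \<in> p" using assms(2) by (auto simp: loc_def)
  have st: "s * t \<in> OF - p" using S_mult s t by blast
  have tF: "t \<in> F" using t OF_F by auto
  have e3: "(s * t) * (x - y) = t * (s * x) - s * (t * y)"
    using Fcomm[OF tF, of s] Fcomm[OF tF, of x] by (simp add: right_diff_distrib mult.assoc) (metis mult.assoc)
  have sO: "s \<in> OF" and tO: "t \<in> OF" using s t by auto
  have "(s * t) * (x - y) \<in> p" unfolding e3 using p_diff[OF p_abs[OF tO s(2)] p_abs[OF sO t(2)]] .
  then show ?thesis unfolding loc_def using st by blast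
qed

lemma R_P_mult: assumes "r \<in> R" "x \<in> P" shows "r * x \<in> P"
proof -
  obtain s where s: "s \<in> OF - p" "s * r \<in> OF" using assms(1) by (auto simp: loc_def)
  obtain t where t: "t \<in> OF - p" "t * x \<in> p" using assms(2) by (auto simp: loc_def)
  have st: "s * t \<in> OF - p" using S_mult s t by blast
  have tF: "t \<in> F" using t OF_F by auto
  have e2: "(s * t) * (r * x) = (s * r) * (t * x)"
    using Fcomm[OF tF, of r] by (simp add: mult.assoc) (metis mult.assoc)
  have "(s * t) * (r * x) \<in> p" unfolding e2 using p_abs[OF s(2) t(2)] .
  then show ?thesis unfolding loc_def using st by blast
qed

lemma unit_R: assumes "y \<in> R" "y \<notin> P" shows "\<exists>z\<in>R. y * z = 1"
proof -
  obtain s where s: "s \<in> OF - p" "s * y \<in> OF" using assms(1) by (auto simp: loc_def)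
  have tp: "s * y \<notin> p" using assms(2) s(1) by (auto simp: loc_def)
  have yF: "y \<in> F" using R_F assms(1) by blast
  have "y \<noteq> 0" using tp p0 by auto
  then obtain z where z: "z \<in> F" "y * z = 1" using Finv[OF yF] by blast
  have "(s * y) * z = s" using z by (simp add: mult.assoc)
  then have "z \<in> R" unfolding loc_def using s tp by (auto intro!: bexI[of _ "s * y"])
  then show ?thesis using z by blast
qed

lemma unit_not_P: assumes "y \<in> P" "z \<in> R" "y * z = 1" shows False
proof -
  have "z * y = 1" using assms(3) Fcomm[OF R_F[OF assms(2)], of y] by simp
  then show False using R_P_mult[OF assms(2,1)] one_notin_P by simp
qed

lemma common_denom:
  assumes "finite I" "\<And>i. i \<in> I \<Longrightarrow> r i \<in> R"
  shows "\<exists>s\<in>OF - p. \<forall>i\<in>I. s * r i \<in> OF"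
  using assms
proof (induction I rule: finite_induct)
  case empty
  then show ?case using OF_1 one_notin_p by blast
next
  case (insert j I)
  then obtain s where s: "s \<in> OF - p" "\<forall>i\<in>I. s * r i \<in> OF" by auto
  obtain t where t: "t \<in> OF - p" "t * r j \<in> OF" using insert.prems[of j] by (auto simp: loc_def)
  have tF: "t \<in> F" using t OF_F by auto
  have "\<forall>i\<in>insert j I. (s * t) * r i \<in> OF"
  proof
    fix i assume "i \<in> insert j I"
    then consider "i = j" | "i \<in> I" by blast
    then show "(s * t) * r i \<in> OF"
    proof cases
      case 1 then show ?thesis using s t by (simp add: mult.assoc OF_ops)
    next
      case 2
      have "(s * t) * r i = t * (s * r i)" using Fcomm[OF tF, of s] by (simp add: mult.assoc[symmetric])
      then show ?thesis using s t 2 by (simp add: OF_ops)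
    qed
  qed
  then show ?case using S_mult[OF s(1) t(1)] by blast
qed

lemma R_int_closed:
  assumes u: "u \<in> F" and rel: "u ^ n + (\<Sum>i<n. r i * u ^ i) = 0" and r: "\<And>i. i < n \<Longrightarrow> r i \<in> R"
  shows "u \<in> R"
proof -
  obtain s where s: "s \<in> OF - p" "\<And>i. i < n \<Longrightarrow> s * r i \<in> OF"
    using common_denom[of "{..<n}" r] r by auto
  have sF: "s \<in> F" using s OF_F by auto
  define e where "e i = s ^ (n - Suc i) * (s * r i)" for i
  have e: "\<And>i. i < n \<Longrightarrow> e i \<in> OF" unfolding e_def using s by (auto intro: OF_ops OF_pow)
  have "s ^ n * (u ^ n + (\<Sum>i<n. r i * u ^ i)) = 0" using rel by simp
  moreover have "s ^ n * (u ^ n + (\<Sum>i<n. r i * u ^ i)) = (s * u) ^ n + (\<Sum>i<n. e i * (s * u) ^ i)"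
  proof -
    have "s ^ n * (r i * u ^ i) = e i * (s * u) ^ i" if i: "i < n" for i
    proof -
      have "s ^ n = s ^ ((n - Suc i) + 1 + i)" using i by simp
      also have "\<dots> = s ^ (n - Suc i) * s * s ^ i" by (simp only: power_add power_one_right)
      finally have sn: "s ^ n = s ^ (n - Suc i) * s * s ^ i" .
      have c: "s ^ i * r i = r i * s ^ i" using Fcomm[OF Fpow[OF sF]] by simp
      have "s ^ n * (r i * u ^ i) = s ^ (n - Suc i) * s * (s ^ i * r i) * u ^ i"
        unfolding sn by (simp add: mult.assoc)
      also have "\<dots> = e i * (s ^ i * u ^ i)" unfolding c e_def by (simp add: mult.assoc)
      finally show ?thesis using pow_central[OF sF] by simp
    qed
    then show ?thesis by (simp add: distrib_left sum_distrib_left pow_central[OF sF])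
  qed
  ultimately have "(s * u) ^ n + (\<Sum>i<n. e i * (s * u) ^ i) = 0" by simp
  then have "s * u \<in> OF" using OF_trans[of "s * u" n e] e sF u by auto
  then show ?thesis unfolding loc_def using s by auto
qed

end

context place
begin

lemma Fleft: "x \<in> F \<Longrightarrow> y * (x * z) = x * (y * z)"
  using Fcomm[of x y] by (simp add: mult.assoc[symmetric])

lemma kap:
  assumes u: "u \<in> F" "u \<noteq> 0"
  shows "(\<forall>i\<le>n. a i \<in> R) \<Longrightarrow> (\<exists>k\<le>n. \<exists>b\<in>R. a k * b = 1) \<Longrightarrow> (\<Sum>i\<le>n. a i * u ^ i) = 0
    \<Longrightarrow> u \<in> R \<or> (\<exists>v\<in>R. u * v = 1)"
proof (induction n arbitrary: a)
  case 0
  then obtain b where "a 0 * b = 1" by auto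
  moreover have "a 0 = 0" using 0 by simp
  ultimately show ?case using zero_neq_one' by simp
next
  case (Suc n)
  have aR: "\<And>i. i \<le> Suc n \<Longrightarrow> a i \<in> R" using Suc.prems(1) by blast
  have aF: "\<And>i. i \<le> Suc n \<Longrightarrow> a i \<in> F" using aR R_F by blast
  have eq: "(\<Sum>i\<le>Suc n. a i * u ^ i) = 0" using Suc.prems(3) .
  have split: "(\<Sum>i\<le>Suc n. a i * u ^ i) = (\<Sum>i\<le>n. a i * u ^ i) + a (Suc n) * u ^ Suc n"
    by (rule sum.atMost_Suc)
  show ?case
  proof (cases "\<exists>b\<in>R. a (Suc n) * b = 1")
    case True
    then obtain b where b: "b \<in> R" "a (Suc n) * b = 1" by blast
    have bF: "b \<in> F" using R_F b by blast
    have ba: "b * a (Suc n) = 1" using b(2) Fcomm[OF bF, of "a (Suc n)"] by simp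
    have "b * (\<Sum>i\<le>Suc n. a i * u ^ i) = (\<Sum>i\<le>n. (b * a i) * u ^ i) + (b * a (Suc n)) * u ^ Suc n"
      unfolding split by (simp add: distrib_left sum_distrib_left mult.assoc)
    also have "\<dots> = u ^ Suc n + (\<Sum>i<Suc n. (b * a i) * u ^ i)"
      unfolding ba lessThan_Suc_atMost by simp
    finally have rel: "u ^ Suc n + (\<Sum>i<Suc n. (b * a i) * u ^ i) = 0" using eq by simp
    have "u \<in> R" using R_int_closed[OF u(1) rel] b aR R_ops by auto
    then show ?thesis by blast
  next
    case False
    then have aNP: "a (Suc n) \<in> P" using unit_R aR[of "Suc n"] by blast
    define aN where "aN = a (Suc n)"
    have aNF: "aN \<in> F" using aF aN_def by simp
    define v where "v = aN * u"
    have vF: "v \<in> F" using aNF u v_def by auto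
    define r where "r i = a i * aN ^ (n - i)" for i
    have rR: "\<And>i. i < Suc n \<Longrightarrow> r i \<in> R"
    proof -
      fix i assume i: "i < Suc n"
      have ai: "a i \<in> R" using aR i by simp
      have "a (Suc n) \<in> R" using aR by simp
      then have "aN ^ (n - i) \<in> R" unfolding aN_def by (rule R_pow)
      with ai show "r i \<in> R" unfolding r_def by (rule R_ops(2))
    qed
    have "aN ^ n * (\<Sum>i\<le>Suc n. a i * u ^ i) = v ^ Suc n + (\<Sum>i<Suc n. r i * v ^ i)"
    proof -
      have t1: "aN ^ n * (a i * u ^ i) = r i * v ^ i" if i: "i \<le> n" for i
      proof -
        have aiF: "a i \<in> F" using aF i by simp
        have e1: "aN ^ n * (a i * u ^ i) = a i * (aN ^ n * u ^ i)" by (rule Fleft[OF aiF])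
        have e2: "aN ^ (n - i) * (aN ^ i * u ^ i) = aN ^ n * u ^ i"
          using i by (simp add: mult.assoc[symmetric] power_add[symmetric])
        have "aN ^ n * (a i * u ^ i) = (a i * aN ^ (n - i)) * (aN ^ i * u ^ i)"
          unfolding e1 mult.assoc e2 ..
        then show ?thesis unfolding r_def v_def pow_central[OF aNF] .
      qed
      have t2: "aN ^ n * (aN * u ^ Suc n) = v ^ Suc n"
        unfolding v_def pow_central[OF aNF] by (simp add: mult.assoc[symmetric] power_commutes)
      have "aN ^ n * (\<Sum>i\<le>Suc n. a i * u ^ i) = (\<Sum>i\<le>n. aN ^ n * (a i * u ^ i)) + aN ^ n * (aN * u ^ Suc n)"
        unfolding split aN_def by (simp add: distrib_left sum_distrib_left)
      also have "\<dots> = (\<Sum>i\<le>n. r i * v ^ i) + v ^ Suc n"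
        using t1 t2 by simp
      finally show ?thesis unfolding lessThan_Suc_atMost by simp
    qed
    then have rel: "v ^ Suc n + (\<Sum>i<Suc n. r i * v ^ i) = 0" using eq by simp
    have vR: "v \<in> R" using R_int_closed[OF vF rel rR] .
    show ?thesis
    proof (cases "v \<in> P")
      case False
      then obtain w where w: "w \<in> R" "v * w = 1" using unit_R vR by blast
      have "u * (aN * w) = v * w" unfolding v_def using Fcomm[OF aNF, of u] by (simp add: mult.assoc)
      moreover have "aN * w \<in> R" using aR[of "Suc n"] w R_ops aN_def by auto
      ultimately show ?thesis using w by auto
    next
      case True
      define a' where "a' i = (if i = n then a n + v else a i)" for i
      have a'R: "\<forall>i\<le>n. a' i \<in> R" using aR vR R_ops by (auto simp: a'_def)
      have "(\<Sum>i\<le>n. a' i * u ^ i) = (\<Sum>i\<le>n. a i * u ^ i + (if i = n then v * u ^ i else 0))"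
        by (rule sum.cong) (auto simp: a'_def distrib_right)
      also have "\<dots> = (\<Sum>i\<le>n. a i * u ^ i) + v * u ^ n"
        by (simp add: sum.distrib)
      also have "v * u ^ n = a (Suc n) * u ^ Suc n" unfolding v_def aN_def by (simp add: mult.assoc)
      finally have rel': "(\<Sum>i\<le>n. a' i * u ^ i) = 0" using eq split by simp
      obtain k b where kb: "k \<le> Suc n" "b \<in> R" "a k * b = 1" using Suc.prems(2) by blast
      have "k \<noteq> Suc n" using False kb by auto
      then have kn: "k \<le> n" using kb by simp
      have "\<exists>b\<in>R. a' k * b = 1"
      proof (cases "k = n")
        case False then show ?thesis using kb by (auto simp: a'_def)
      next
        case True
        have anP: "a n \<notin> P" using unit_not_P kb True by blast
        have "a n + v \<notin> P"
        proof
          assume "a n + v \<in> P"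
          then have "(a n + v) - v \<in> P" using P_diff \<open>v \<in> P\<close> by blast
          then show False using anP by simp
        qed
        moreover have "a n + v \<in> R" using aR vR R_ops by auto
        ultimately show ?thesis using unit_R True by (auto simp: a'_def)
      qed
      then have "\<exists>k\<le>n. \<exists>b\<in>R. a' k * b = 1" using kn by blast
      then show ?thesis using Suc.IH[OF a'R _ rel'] by blast
    qed
  qed
qed

lemma Gcd_in_p:
  assumes "finite A" "\<And>a. a \<in> A \<Longrightarrow> (of_int a :: 'a) \<in> p"
  shows "(of_int (Gcd A) :: 'a) \<in> p"
  using assms
proof (induction A rule: finite_induct)
  case empty
  then show ?case using p0 by simp
next
  case (insert a A)
  have IH: "(of_int (Gcd A) :: 'a) \<in> p" using insert by auto
  have ha: "(of_int a :: 'a) \<in> p" using insert.prems by auto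
  obtain x y where xy: "x * a + y * Gcd A = gcd a (Gcd A)" using bezout_int by blast
  have "(of_int (gcd a (Gcd A)) :: 'a) = of_int x * of_int a + of_int y * of_int (Gcd A)"
    unfolding xy[symmetric] by simp
  also have "\<dots> \<in> p" using p_add p_abs OF_of_int IH ha by blast
  finally show ?case by simp
qed

lemma descent:
  fixes d :: "nat \<Rightarrow> int"
  assumes "d m \<noteq> 0" "(\<Sum>i\<le>m. of_int (d i) * u ^ i) = (0::'a)"
  shows "\<exists>e. \<exists>k\<le>m. (of_int (e k) :: 'a) \<notin> p \<and> (\<Sum>i\<le>m. of_int (e i) * u ^ i) = (0::'a)"
  using assms
proof (induction "nat \<bar>d m\<bar>" arbitrary: d rule: less_induct)
  case less
  show ?case
  proof (cases "\<exists>k\<le>m. (of_int (d k) :: 'a) \<notin> p")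
    case True
    then show ?thesis using less.prems by blast
  next
    case False
    define g where "g = Gcd (d ` {..m})"
    have gp: "(of_int g :: 'a) \<in> p" unfolding g_def using False by (intro Gcd_in_p) auto
    have gd: "\<And>i. i \<le> m \<Longrightarrow> g dvd d i" unfolding g_def by (intro Gcd_dvd) auto
    have g0: "g \<noteq> 0" unfolding g_def using less.prems(1) Gcd_0_iff by fastforce
    have g1: "g \<noteq> 1" using gp one_notin_p by auto
    have gm1: "g \<noteq> -1" using p_uminus[OF gp] one_notin_p by auto
    define e where "e i = d i div g" for i
    have de: "\<And>i. i \<le> m \<Longrightarrow> d i = g * e i" unfolding e_def using gd by simp
    have "(\<Sum>i\<le>m. of_int (d i) * u ^ i) = (of_int g :: 'a) * (\<Sum>i\<le>m. of_int (e i) * u ^ i)"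
      unfolding sum_distrib_left by (rule sum.cong) (simp_all add: de mult.assoc)
    then have e0: "(\<Sum>i\<le>m. of_int (e i) * u ^ i) = (0::'a)"
      using less.prems(2) Fcancel[OF Fof_int of_int_nz[OF g0]] by simp
    have dm: "d m = g * e m" using de by simp
    then have em: "e m \<noteq> 0" using less.prems(1) by auto
    have "\<bar>g\<bar> \<ge> 2" using g0 g1 gm1 by linarith
    then have "\<bar>e m\<bar> < \<bar>d m\<bar>" using dm em by (simp add: abs_mult)
    then have "nat \<bar>e m\<bar> < nat \<bar>d m\<bar>" by simp
    then show ?thesis using less.hyps[OF _ em e0] by blast
  qed
qed

lemma valuation:
  assumes u: "u \<in> F" "u \<noteq> 0"
  shows "u \<in> R \<or> (\<exists>v\<in>R. u * v = 1)"
proof -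
  obtain N where N: "N \<noteq> 0" "of_int N * u \<in> OF" using F_denom[OF u(1)] by blast
  then obtain m c where mc: "(of_int N * u) ^ m + (\<Sum>i<m. of_int (c i) * (of_int N * u) ^ i) = 0"
    by (auto simp: OF_def' integral_def)
  define d where "d i = (if i = m then N ^ m else c i * N ^ i)" for i
  have pw: "\<And>i. (of_int N * u) ^ i = of_int (N ^ i) * u ^ i" using pow_central[OF Fof_int] by simp
  have "(\<Sum>i\<le>m. of_int (d i) * u ^ i) = (\<Sum>i<m. of_int (d i) * u ^ i) + of_int (d m) * u ^ m"
    by (simp add: lessThan_Suc_atMost[symmetric])
  also have "(\<Sum>i<m. of_int (d i) * u ^ i) = (\<Sum>i<m. of_int (c i) * (of_int N * u) ^ i)"
    by (rule sum.cong) (simp_all add: d_def pw mult.assoc)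
  also have "of_int (d m) * u ^ m = (of_int N * u) ^ m" by (simp add: d_def pw)
  finally have drel: "(\<Sum>i\<le>m. of_int (d i) * u ^ i) = (0::'a)" using mc by (simp add: add.commute)
  have "d m \<noteq> 0" using N by (simp add: d_def)
  then obtain e k where ek: "k \<le> m" "(of_int (e k) :: 'a) \<notin> p" "(\<Sum>i\<le>m. of_int (e i) * u ^ i) = (0::'a)"
    using descent[OF _ drel] by blast
  have ekS: "(of_int (e k) :: 'a) \<in> OF - p" using ek OF_of_int by auto
  obtain z where z: "z \<in> F" "of_int (e k) * z = 1" using Finv[OF S_F[OF ekS] S_nz[OF ekS]] by blast
  have "of_int (e k) * z \<in> OF" using z OF_1 by simp
  then have "z \<in> R" unfolding loc_def using ekS by blast
  then have "\<exists>k\<le>m. \<exists>b\<in>R. (\<lambda>i. of_int (e i)) k * b = 1" using ek z by auto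
  moreover have "\<forall>i\<le>m. (\<lambda>i. (of_int (e i) :: 'a)) i \<in> R" using R_of_int by auto
  ultimately show ?thesis using kap[OF u, of m "\<lambda>i. of_int (e i)"] ek(3) by blast
qed

end

lemma setmul_iff: "z \<in> setmul X Y \<longleftrightarrow> (\<exists>x\<in>X. \<exists>y\<in>Y. z = x * y)"
  unfolding setmul_def by blast

lemma addgen_0: "0 \<in> addgen X"
  unfolding addgen_def by (rule CollectI, rule exI[of _ "[]"]) simp

lemma addgen_add: assumes "x \<in> addgen X" "y \<in> addgen X" shows "x + y \<in> addgen X"
proof -
  obtain xs ys where "x = sum_list xs" "set xs \<subseteq> X" "y = sum_list ys" "set ys \<subseteq> X"
    using assms unfolding addgen_def by blast
  then show ?thesis unfolding addgen_def by (intro CollectI exI[of _ "xs @ ys"]) auto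
qed

lemma addgen_base: "x \<in> X \<Longrightarrow> x \<in> addgen X"
  unfolding addgen_def by (rule CollectI, rule exI[of _ "[x]"]) simp

lemma addgen_closed:
  assumes "0 \<in> S" "\<And>x y. x \<in> X \<Longrightarrow> y \<in> S \<Longrightarrow> x + y \<in> S" "w \<in> addgen X"
  shows "w \<in> S"
proof -
  obtain xs where xs: "w = sum_list xs" "set xs \<subseteq> X" using assms(3) unfolding addgen_def by blast
  have "set xs \<subseteq> X \<Longrightarrow> sum_list xs \<in> S" by (induction xs) (auto intro: assms(1,2))
  then show ?thesis using xs by simp
qed

lemma addgen_lmult:
  assumes "\<And>x. x \<in> X \<Longrightarrow> c * x \<in> addgen Y" "w \<in> addgen X"
  shows "c * w \<in> addgen Y"
proof -
  have "w \<in> {w. c * w \<in> addgen Y}"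
    by (rule addgen_closed[OF _ _ assms(2)]) (simp_all add: addgen_0 distrib_left addgen_add assms(1))
  then show ?thesis by simp
qed

lemma addgen_rmult:
  assumes "\<And>x. x \<in> X \<Longrightarrow> x * c \<in> addgen Y" "w \<in> addgen X"
  shows "w * c \<in> addgen Y"
proof -
  have "w \<in> {w. w * c \<in> addgen Y}"
    by (rule addgen_closed[OF _ _ assms(2)]) (simp_all add: addgen_0 distrib_right addgen_add assms(1))
  then show ?thesis by simp
qed

lemma addgen_mono: "X \<subseteq> Y \<Longrightarrow> addgen X \<subseteq> addgen Y"
  unfolding addgen_def by blast

context nf
begin

lemma OF_sum: "(\<And>i. i \<in> I \<Longrightarrow> f i \<in> ring_of_integers F) \<Longrightarrow> sum f I \<in> ring_of_integers F"
  by (induction I rule: infinite_finite_induct) (auto intro: OF_ops)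

definition ospan :: "'a set \<Rightarrow> 'a set" where
  "ospan G = {w. \<exists>c. (\<forall>g\<in>G. c g \<in> ring_of_integers F) \<and> w = (\<Sum>g\<in>G. c g * g)}"

lemma ospan_0: "0 \<in> ospan G"
  unfolding ospan_def by (rule CollectI, rule exI[of _ "\<lambda>_. 0"]) auto

lemma ospan_add: assumes "x \<in> ospan G" "y \<in> ospan G" shows "x + y \<in> ospan G"
proof -
  obtain c d where "\<forall>g\<in>G. c g \<in> ring_of_integers F" "x = (\<Sum>g\<in>G. c g * g)"
     "\<forall>g\<in>G. d g \<in> ring_of_integers F" "y = (\<Sum>g\<in>G. d g * g)"
    using assms unfolding ospan_def by blast
  then show ?thesis unfolding ospan_def
    by (intro CollectI exI[of _ "\<lambda>g. c g + d g"]) (auto simp: sum.distrib distrib_right intro: OF_ops)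
qed

lemma ospan_mult:
  assumes fin: "finite G1" "finite G2" and y: "y \<in> ospan G1" and z: "z \<in> ospan G2"
  shows "y * z \<in> ospan ((\<lambda>(g,h). g * h) ` (G1 \<times> G2))"
proof -
  obtain c where c: "\<forall>g\<in>G1. c g \<in> ring_of_integers F" "y = (\<Sum>g\<in>G1. c g * g)"
    using y unfolding ospan_def by blast
  obtain d where d: "\<forall>h\<in>G2. d h \<in> ring_of_integers F" "z = (\<Sum>h\<in>G2. d h * h)"
    using z unfolding ospan_def by blast
  define S where "S = G1 \<times> G2"
  define \<phi> where "\<phi> = (\<lambda>(g::'a,h::'a). g * h)"
  define e0 where "e0 = (\<lambda>(g,h). c g * d h)"
  have finS: "finite S" using fin by (simp add: S_def)
  have e0OF: "\<And>q. q \<in> S \<Longrightarrow> e0 q \<in> ring_of_integers F"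
    using c d by (auto simp: S_def e0_def intro: OF_ops)
  have "y * z = (\<Sum>g\<in>G1. \<Sum>h\<in>G2. (c g * g) * (d h * h))"
    unfolding c(2) d(2) sum_distrib_right by (simp only: sum_distrib_left)
  also have "\<dots> = (\<Sum>g\<in>G1. \<Sum>h\<in>G2. e0 (g,h) * \<phi> (g,h))"
  proof (intro sum.cong refl)
    fix g h assume "g \<in> G1" "h \<in> G2"
    then have dF: "d h \<in> F" using d OF_F by auto
    have "g * (d h * h) = d h * (g * h)" using Fcomm[OF dF, of g] by (simp add: mult.assoc[symmetric])
    then show "(c g * g) * (d h * h) = e0 (g,h) * \<phi> (g,h)"
      by (simp add: e0_def \<phi>_def mult.assoc)
  qed
  also have "\<dots> = (\<Sum>q\<in>S. e0 q * \<phi> q)"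
    unfolding S_def by (simp add: sum.cartesian_product)
  also have "\<dots> = (\<Sum>k\<in>\<phi> ` S. \<Sum>q\<in>{q. q \<in> S \<and> \<phi> q = k}. e0 q * \<phi> q)"
    by (rule sum.image_gen[OF finS])
  also have "\<dots> = (\<Sum>k\<in>\<phi> ` S. (\<Sum>q\<in>{q. q \<in> S \<and> \<phi> q = k}. e0 q) * k)"
    by (intro sum.cong refl) (simp add: sum_distrib_right)
  finally have eq: "y * z = (\<Sum>k\<in>\<phi> ` S. (\<Sum>q\<in>{q. q \<in> S \<and> \<phi> q = k}. e0 q) * k)" .
  have "\<forall>k\<in>\<phi> ` S. (\<Sum>q\<in>{q. q \<in> S \<and> \<phi> q = k}. e0 q) \<in> ring_of_integers F"
    using e0OF by (auto intro!: OF_sum)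
  then have "y * z \<in> ospan (\<phi> ` S)" unfolding ospan_def
    by (intro CollectI exI[of _ "\<lambda>k. \<Sum>q\<in>{q. q \<in> S \<and> \<phi> q = k}. e0 q"] conjI eq)
  then show ?thesis by (simp add: S_def \<phi>_def)
qed

end

locale setting0 = nf +
  fixes K Ord b :: "'a set"
  assumes K_sf: "subfield K" and FK: "F \<subseteq> K"
    and O_lat: "Defs.lattice F UNIV Ord" and O1: "1 \<in> Ord" and O_mult: "\<And>x y. x \<in> Ord \<Longrightarrow> y \<in> Ord \<Longrightarrow> x * y \<in> Ord"
    and b_lat: "Defs.lattice F K b" and b_BO: "b \<subseteq> K \<inter> Ord"
begin

lemma O0: "0 \<in> Ord" and O_add: "x \<in> Ord \<Longrightarrow> y \<in> Ord \<Longrightarrow> x + y \<in> Ord"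
  and O_abs: "a \<in> ring_of_integers F \<Longrightarrow> x \<in> Ord \<Longrightarrow> a * x \<in> Ord"
  and O_full: "\<exists>n::int. n \<noteq> 0 \<and> of_int n * v \<in> Ord"
  and O_fg: "\<exists>G. finite G \<and> G \<subseteq> Ord \<and> (\<forall>x\<in>Ord. \<exists>c. (\<forall>g\<in>G. c g \<in> ring_of_integers F) \<and> x = (\<Sum>g\<in>G. c g * g))"
  using O_lat unfolding Defs.lattice_def by blast+

lemma b0: "0 \<in> b" and b_add: "x \<in> b \<Longrightarrow> y \<in> b \<Longrightarrow> x + y \<in> b"
  and b_abs: "a \<in> ring_of_integers F \<Longrightarrow> x \<in> b \<Longrightarrow> a * x \<in> b"
  and b_full: "v \<in> K \<Longrightarrow> \<exists>n::int. n \<noteq> 0 \<and> of_int n * v \<in> b"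
  and b_fg: "\<exists>G. finite G \<and> G \<subseteq> b \<and> (\<forall>x\<in>b. \<exists>c. (\<forall>g\<in>G. c g \<in> ring_of_integers F) \<and> x = (\<Sum>g\<in>G. c g * g))"
  using b_lat unfolding Defs.lattice_def by blast+

lemma K1: "1 \<in> K" and Kmult: "x \<in> K \<Longrightarrow> y \<in> K \<Longrightarrow> x * y \<in> K"
  using K_sf unfolding subfield_def by blast+

lemma OF_O: "a \<in> ring_of_integers F \<Longrightarrow> a \<in> Ord" using O_abs[OF _ O1] by simp

lemma O_uminus: "x \<in> Ord \<Longrightarrow> - x \<in> Ord" using O_abs[OF OF_of_int[of "-1"]] by simp

lemma bO_sub: "iprod b Ord \<subseteq> Ord"
proof
  fix w assume "w \<in> iprod b Ord"
  then show "w \<in> Ord" unfolding iprod_def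
    by (rule addgen_closed[rotated 2]) (use b_BO O0 in \<open>auto simp: setmul_iff intro!: O_add O_mult\<close>)
qed

lemma ospan_lat: assumes "finite G" "\<forall>x\<in>L. \<exists>c. (\<forall>g\<in>G. c g \<in> ring_of_integers F) \<and> x = (\<Sum>g\<in>G. c g * g)"
  "x \<in> L" shows "x \<in> ospan G"
  using assms unfolding ospan_def by blast

lemma frac_bO: "frac_right_ideal F UNIV Ord (iprod b Ord)"
  unfolding frac_right_ideal_def Defs.lattice_def
proof (intro conjI ballI)
  show "iprod b Ord \<subseteq> UNIV" by simp
  show "0 \<in> iprod b Ord" unfolding iprod_def by (rule addgen_0)
  fix x y assume "x \<in> iprod b Ord" "y \<in> iprod b Ord"
  then show "x + y \<in> iprod b Ord" unfolding iprod_def by (rule addgen_add)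
next
  fix a x assume a: "a \<in> ring_of_integers F" and x: "x \<in> iprod b Ord"
  show "a * x \<in> iprod b Ord" unfolding iprod_def
  proof (rule addgen_lmult[OF _ x[unfolded iprod_def]])
    fix z assume "z \<in> setmul b Ord"
    then obtain y o' where "y \<in> b" "o' \<in> Ord" "z = y * o'" by (auto simp: setmul_iff)
    then have "a * z = (a * y) * o'" "a * y \<in> b" using b_abs a by (auto simp: mult.assoc)
    then have "a * z \<in> setmul b Ord" using \<open>o' \<in> Ord\<close> unfolding setmul_iff by blast
    then show "a * z \<in> addgen (setmul b Ord)" by (rule addgen_base)
  qed
next
  obtain G1 where G1: "finite G1" "G1 \<subseteq> b" "\<forall>x\<in>b. \<exists>c. (\<forall>g\<in>G1. c g \<in> ring_of_integers F) \<and> x = (\<Sum>g\<in>G1. c g * g)"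
    using b_fg by blast
  obtain G2 where G2: "finite G2" "G2 \<subseteq> Ord" "\<forall>x\<in>Ord. \<exists>c. (\<forall>g\<in>G2. c g \<in> ring_of_integers F) \<and> x = (\<Sum>g\<in>G2. c g * g)"
    using O_fg by blast
  define G where "G = (\<lambda>(g,h). g * h) ` (G1 \<times> G2)"
  have "finite G" using G1 G2 by (simp add: G_def)
  moreover have "G \<subseteq> iprod b Ord"
  proof
    fix k assume "k \<in> G"
    then obtain g h where "g \<in> G1" "h \<in> G2" "k = g * h" by (auto simp: G_def)
    then have "k \<in> setmul b Ord" using G1(2) G2(2) unfolding setmul_iff by blast
    then show "k \<in> iprod b Ord" unfolding iprod_def by (rule addgen_base)
  qed
  moreover have "\<forall>x\<in>iprod b Ord. \<exists>c. (\<forall>g\<in>G. c g \<in> ring_of_integers F) \<and> x = (\<Sum>g\<in>G. c g * g)"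
  proof
    fix x assume "x \<in> iprod b Ord"
    then have "x \<in> ospan G" unfolding iprod_def
    proof (rule addgen_closed[rotated 2])
      show "0 \<in> ospan G" by (rule ospan_0)
      fix z w assume z: "z \<in> setmul b Ord" and w: "w \<in> ospan G"
      then obtain y o' where yo: "y \<in> b" "o' \<in> Ord" "z = y * o'" by (auto simp: setmul_iff)
      have "z \<in> ospan G" unfolding yo(3) G_def
        by (rule ospan_mult[OF G1(1) G2(1) ospan_lat[OF G1(1) G1(3) yo(1)] ospan_lat[OF G2(1) G2(3) yo(2)]])
      then show "z + w \<in> ospan G" using w by (rule ospan_add)
    qed
    then show "\<exists>c. (\<forall>g\<in>G. c g \<in> ring_of_integers F) \<and> x = (\<Sum>g\<in>G. c g * g)"
      unfolding ospan_def by blast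
  qed
  ultimately show "\<exists>G. finite G \<and> G \<subseteq> iprod b Ord \<and>
    (\<forall>x\<in>iprod b Ord. \<exists>c. (\<forall>g\<in>G. c g \<in> ring_of_integers F) \<and> x = (\<Sum>g\<in>G. c g * g))" by blast
next
  fix v :: 'a
  obtain m :: int where m: "m \<noteq> 0" "of_int m * 1 \<in> b" using b_full[OF K1] by blast
  obtain n :: int where n: "n \<noteq> 0" "of_int n * v \<in> Ord" using O_full by blast
  have "of_int (m * n) * v = (of_int m * 1) * (of_int n * v)" by (simp add: mult.assoc)
  also have "\<dots> \<in> iprod b Ord" unfolding iprod_def
    by (rule addgen_base) (use m n in \<open>unfold setmul_iff, blast\<close>)
  finally show "\<exists>n::int. n \<noteq> 0 \<and> of_int n * v \<in> iprod b Ord" using m n by (intro exI[of _ "m * n"]) simp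
next
  show "setmul (iprod b Ord) Ord \<subseteq> iprod b Ord"
  proof
    fix z assume "z \<in> setmul (iprod b Ord) Ord"
    then obtain w o' where wo: "w \<in> iprod b Ord" "o' \<in> Ord" "z = w * o'" by (auto simp: setmul_iff)
    have "w * o' \<in> addgen (setmul b Ord)"
    proof (rule addgen_rmult[OF _ wo(1)[unfolded iprod_def]])
      fix x assume "x \<in> setmul b Ord"
      then obtain y o'' where "y \<in> b" "o'' \<in> Ord" "x = y * o''" by (auto simp: setmul_iff)
      then have "x * o' = y * (o'' * o')" "o'' * o' \<in> Ord" using O_mult[OF _ wo(2)] by (auto simp: mult.assoc)
      then have "x * o' \<in> setmul b Ord" using \<open>y \<in> b\<close> unfolding setmul_iff by blast
      then show "x * o' \<in> addgen (setmul b Ord)" by (rule addgen_base)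
    qed
    then show "z \<in> iprod b Ord" unfolding iprod_def wo(3) .
  qed
qed

end

lemma loc_mono: "X \<subseteq> Y \<Longrightarrow> loc F p X \<subseteq> loc F p Y"
  unfolding loc_def by blast

lemma iprod_mono: "Y \<subseteq> Z \<Longrightarrow> iprod X Y \<subseteq> iprod X Z"
  unfolding iprod_def setmul_def by (rule addgen_mono) blast

locale setting = setting0 + place
begin

abbreviation "Op \<equiv> loc F p Ord"
abbreviation "Bp \<equiv> loc F p (K \<inter> Ord)"

lemma loc_self: "x \<in> X \<Longrightarrow> x \<in> loc F p X"
  unfolding loc_def using OF_1 one_notin_p by (intro CollectI bexI[of _ 1]) auto

lemma Op_add: assumes "x \<in> Op" "y \<in> Op" shows "x + y \<in> Op"
proof -
  obtain s where s: "s \<in> OF - p" "s * x \<in> Ord" using assms(1) by (auto simp: loc_def)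
  obtain t where t: "t \<in> OF - p" "t * y \<in> Ord" using assms(2) by (auto simp: loc_def)
  have st: "s * t \<in> OF - p" using S_mult s t by blast
  have tF: "t \<in> F" using t OF_F by auto
  have e1: "(s * t) * (x + y) = t * (s * x) + s * (t * y)"
    using Fcomm[OF tF, of s] Fcomm[OF tF, of x] by (simp add: distrib_left mult.assoc) (metis mult.assoc)
  have sO: "s \<in> OF" and tO: "t \<in> OF" using s t by auto
  have "(s * t) * (x + y) \<in> Ord" unfolding e1 using O_add[OF O_abs[OF tO s(2)] O_abs[OF sO t(2)]] .
  then show ?thesis unfolding loc_def using st by blast
qed

lemma Op_mult: assumes "x \<in> Op" "y \<in> Op" shows "x * y \<in> Op"
proof -
  obtain s where s: "s \<in> OF - p" "s * x \<in> Ord" using assms(1) by (auto simp: loc_def)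
  obtain t where t: "t \<in> OF - p" "t * y \<in> Ord" using assms(2) by (auto simp: loc_def)
  have st: "s * t \<in> OF - p" using S_mult s t by blast
  have tF: "t \<in> F" using t OF_F by auto
  have e2: "(s * t) * (x * y) = (s * x) * (t * y)"
    using Fcomm[OF tF, of x] by (simp add: mult.assoc) (metis mult.assoc)
  have "(s * t) * (x * y) \<in> Ord" unfolding e2 using O_mult[OF s(2) t(2)] .
  then show ?thesis unfolding loc_def using st by blast
qed

lemma R_Op: assumes "r \<in> R" "y \<in> Op" shows "r * y \<in> Op"
proof -
  obtain s where s: "s \<in> OF - p" "s * r \<in> OF" using assms(1) by (auto simp: loc_def)
  obtain t where t: "t \<in> OF - p" "t * y \<in> Ord" using assms(2) by (auto simp: loc_def)
  have st: "s * t \<in> OF - p" using S_mult s t by blast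
  have tF: "t \<in> F" using t OF_F by auto
  have e2: "(s * t) * (r * y) = (s * r) * (t * y)"
    using Fcomm[OF tF, of r] by (simp add: mult.assoc) (metis mult.assoc)
  have "(s * t) * (r * y) \<in> Ord" unfolding e2 using O_abs[OF s(2) t(2)] .
  then show ?thesis unfolding loc_def using st by blast
qed

lemma Bp_Op: "Bp \<subseteq> Op" by (rule loc_mono) blast

lemma Bp_mult: assumes "x \<in> Bp" "y \<in> Bp" shows "x * y \<in> Bp"
proof -
  obtain s where s: "s \<in> OF - p" "s * x \<in> K \<inter> Ord" using assms(1) by (auto simp: loc_def)
  obtain t where t: "t \<in> OF - p" "t * y \<in> K \<inter> Ord" using assms(2) by (auto simp: loc_def)
  have st: "s * t \<in> OF - p" using S_mult s t by blast
  have tF: "t \<in> F" using t OF_F by auto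
  have e2: "(s * t) * (x * y) = (s * x) * (t * y)"
    using Fcomm[OF tF, of x] by (simp add: mult.assoc) (metis mult.assoc)
  have "(s * t) * (x * y) \<in> K \<inter> Ord" unfolding e2 using s t by (auto intro: O_mult Kmult)
  then show ?thesis unfolding loc_def using st by blast
qed

lemma one_Bp: "1 \<in> Bp" using loc_self[of 1 "K \<inter> Ord"] K1 O1 by blast

lemma Op_K: assumes "y \<in> Op" "y \<in> K" shows "y \<in> Bp"
proof -
  obtain t where t: "t \<in> OF - p" "t * y \<in> Ord" using assms(1) by (auto simp: loc_def)
  have "t \<in> K" using t OF_F FK by blast
  then have "t * y \<in> K" using Kmult assms(2) by blast
  then show ?thesis unfolding loc_def using t by blast
qed

lemma iprod_p_right:
  assumes "\<And>z. z \<in> X \<Longrightarrow> z * y \<in> X" "w \<in> iprod p X"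
  shows "w * y \<in> iprod p X"
  unfolding iprod_def
proof (rule addgen_rmult[OF _ assms(2)[unfolded iprod_def]])
  fix z assume "z \<in> setmul p X"
  then obtain a x where "a \<in> p" "x \<in> X" "z = a * x" by (auto simp: setmul_iff)
  then have "z * y \<in> setmul p X" using assms(1) unfolding setmul_iff by (metis mult.assoc)
  then show "z * y \<in> addgen (setmul p X)" by (rule addgen_base)
qed

lemma pOp_factor:
  assumes "w \<in> iprod p Op" shows "\<exists>a\<in>p. \<exists>y\<in>Op. w = a * y"
proof -
  have "w \<in> {w. \<exists>a\<in>p. \<exists>y\<in>Op. w = a * y}"
  proof (rule addgen_closed[OF _ _ assms[unfolded iprod_def]])
    have "(0::'a) = 0 * 0" by simp
    then show "0 \<in> {w. \<exists>a\<in>p. \<exists>y\<in>Op. w = a * y}" using p0 loc_self[OF O0] by blast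
    fix z w assume z: "z \<in> setmul p Op" and w: "w \<in> {w. \<exists>a\<in>p. \<exists>y\<in>Op. w = a * y}"
    obtain a1 y1 where 1: "a1 \<in> p" "y1 \<in> Op" "z = a1 * y1" using z by (auto simp: setmul_iff)
    obtain a2 y2 where 2: "a2 \<in> p" "y2 \<in> Op" "w = a2 * y2" using w by auto
    show "z + w \<in> {w. \<exists>a\<in>p. \<exists>y\<in>Op. w = a * y}"
    proof (cases "a1 = 0 \<or> a2 = 0")
      case True
      then have "z + w = a2 * y2 \<or> z + w = a1 * y1" using 1 2 by auto
      then show ?thesis using 1 2 by blast
    next
      case False
      have a1F: "a1 \<in> F" and a2F: "a2 \<in> F" using 1 2 p_OF OF_F by auto
      obtain a1i where a1i: "a1i \<in> F" "a1 * a1i = 1" "a1i * a1 = 1" using Finv[OF a1F] False by blast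
      define u where "u = a1i * a2"
      have a2u: "a2 = a1 * u" unfolding u_def using a1i by (simp add: mult.assoc[symmetric])
      have uF: "u \<in> F" using a1i a2F u_def by auto
      have u0: "u \<noteq> 0" using a2u False by auto
      consider "u \<in> R" | v where "v \<in> R" "u * v = 1" using valuation[OF uF u0] by blast
      then show ?thesis
      proof cases
        case 1
        have "z + w = a1 * (y1 + u * y2)" unfolding \<open>z = a1 * y1\<close> 2(3) a2u by (simp add: distrib_left mult.assoc)
        moreover have "y1 + u * y2 \<in> Op" using Op_add R_Op 1 \<open>y1 \<in> Op\<close> 2(2) by blast
        ultimately show ?thesis using \<open>a1 \<in> p\<close> by blast
      next
        case 2
        have "a2 * v = a1" unfolding a2u using 2 by (simp add: mult.assoc)
        then have "z + w = a2 * (v * y1 + y2)" unfolding \<open>z = a1 * y1\<close> \<open>w = a2 * y2\<close>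
          by (simp add: distrib_left mult.assoc[symmetric])
        moreover have "v * y1 + y2 \<in> Op" using Op_add R_Op 2 \<open>y1 \<in> Op\<close> \<open>y2 \<in> Op\<close> by blast
        ultimately show ?thesis using \<open>a2 \<in> p\<close> by blast
      qed
    qed
  qed
  then show ?thesis by blast
qed

lemma key:
  assumes xK: "x \<in> K" and x: "x \<in> iprod p Op"
  shows "x \<in> iprod p Bp"
proof -
  obtain a y where ay: "a \<in> p" "y \<in> Op" "x = a * y" using pOp_factor[OF x] by blast
  show ?thesis
  proof (cases "a = 0")
    case True
    then show ?thesis using ay addgen_0 unfolding iprod_def by simp
  next
    case False
    have aF: "a \<in> F" using ay p_OF OF_F by auto
    obtain ai where ai: "ai \<in> F" "ai * a = 1" using Finv[OF aF False] by blast
    have "y = ai * x" unfolding ay(3) using ai by (simp add: mult.assoc[symmetric])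
    moreover have "ai \<in> K" using ai FK by blast
    ultimately have "y \<in> K" using Kmult xK by simp
    then have "y \<in> Bp" using Op_K ay by blast
    then have "x \<in> setmul p Bp" using ay unfolding setmul_iff by blast
    then show ?thesis unfolding iprod_def by (rule addgen_base)
  qed
qed

lemma bOp_eq:
  assumes xK: "x \<in> K" and bp: "loc F p b = setmul {x} Bp"
  shows "loc F p (iprod b Ord) = setmul {x} Op"
proof
  show "setmul {x} Op \<subseteq> loc F p (iprod b Ord)"
  proof
    fix z assume "z \<in> setmul {x} Op"
    then obtain o' where o': "o' \<in> Op" "z = x * o'" by (auto simp: setmul_iff)
    obtain s where s: "s \<in> OF - p" "s * o' \<in> Ord" using o' by (auto simp: loc_def)
    have "x \<in> loc F p b" unfolding bp setmul_iff using one_Bp by force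
    then obtain t where t: "t \<in> OF - p" "t * x \<in> b" by (auto simp: loc_def)
    have sF: "s \<in> F" using s OF_F by auto
    have "(t * s) * z = (t * x) * (s * o')"
      unfolding o'(2) using Fcomm[OF sF, of x] by (simp add: mult.assoc) (metis mult.assoc)
    also have "\<dots> \<in> iprod b Ord" unfolding iprod_def
      by (rule addgen_base) (use s t in \<open>unfold setmul_iff, blast\<close>)
    finally show "z \<in> loc F p (iprod b Ord)" unfolding loc_def using S_mult[OF t(1) s(1)] by blast
  qed
next
  have fac: "\<exists>q\<in>Op. w = x * q" if w: "w \<in> iprod b Ord" for w
  proof -
    have "w \<in> {w. \<exists>q\<in>Op. w = x * q}"
    proof (rule addgen_closed[OF _ _ w[unfolded iprod_def]])
      show "0 \<in> {w. \<exists>q\<in>Op. w = x * q}" using loc_self[OF O0] by force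
      fix z w assume z: "z \<in> setmul b Ord" and w: "w \<in> {w. \<exists>q\<in>Op. w = x * q}"
      obtain y o' where yo: "y \<in> b" "o' \<in> Ord" "z = y * o'" using z by (auto simp: setmul_iff)
      have "y \<in> loc F p b" using loc_self yo(1) by blast
      then obtain c where c: "c \<in> Bp" "y = x * c" unfolding bp setmul_iff by blast
      obtain q where q: "q \<in> Op" "w = x * q" using w by blast
      have "z + w = x * (c * o' + q)" unfolding yo(3) c(2) q(2) by (simp add: distrib_left mult.assoc)
      moreover have "c * o' + q \<in> Op" using Op_add Op_mult Bp_Op c(1) loc_self[OF yo(2)] q(1) by blast
      ultimately show "z + w \<in> {w. \<exists>q\<in>Op. w = x * q}" by blast
    qed
    then show ?thesis by blast
  qed
  show "loc F p (iprod b Ord) \<subseteq> setmul {x} Op"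
  proof
    fix z assume "z \<in> loc F p (iprod b Ord)"
    then obtain s where s: "s \<in> OF - p" "s * z \<in> iprod b Ord" by (auto simp: loc_def)
    obtain q where q: "q \<in> Op" "s * z = x * q" using fac[OF s(2)] by blast
    have sF: "s \<in> F" using s OF_F by auto
    obtain si where si: "si \<in> F" "s * si = 1" "si * s = 1" using Finv[OF sF S_nz[OF s(1)]] by blast
    have "s * si \<in> OF" using si OF_1 by simp
    then have siR: "si \<in> R" unfolding loc_def using s by blast
    have "z = si * (s * z)" using si by (simp add: mult.assoc[symmetric])
    also have "\<dots> = x * (si * q)" unfolding q(2) by (rule Fleft[OF si(1), symmetric])
    finally have "z = x * (si * q)" .
    moreover have "si * q \<in> Op" using R_Op[OF siR q(1)] .
    ultimately show "z \<in> setmul {x} Op" unfolding setmul_iff by blast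
  qed
qed

lemma place_equiv:
  assumes xK: "x \<in> K" and bp: "loc F p b = setmul {x} Bp"
  shows "loc_primitive F K p (K \<inter> Ord) b \<longleftrightarrow> loc_primitive F UNIV p Ord (iprod b Ord)"
proof -
  have bOp: "loc F p (iprod b Ord) = setmul {x} Op" by (rule bOp_eq[OF xK bp])
  have i1: "loc F p b \<subseteq> Bp" using b_BO by (rule loc_mono)
  have i2: "loc F p (iprod b Ord) \<subseteq> Op" using bO_sub by (rule loc_mono)
  have x_bp: "x \<in> loc F p b" unfolding bp setmul_iff using one_Bp by force
  have x_bOp: "x \<in> loc F p (iprod b Ord)" unfolding bOp setmul_iff using loc_self[OF O1] by force
  have c1: "loc F p b \<subseteq> iprod p Bp \<longleftrightarrow> x \<in> iprod p Bp"
  proof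
    assume "x \<in> iprod p Bp"
    show "loc F p b \<subseteq> iprod p Bp"
    proof
      fix y assume "y \<in> loc F p b"
      then obtain c where "c \<in> Bp" "y = x * c" unfolding bp setmul_iff by blast
      then show "y \<in> iprod p Bp" using iprod_p_right[OF _ \<open>x \<in> iprod p Bp\<close>, of c] Bp_mult by blast
    qed
  qed (use x_bp in blast)
  have c2: "loc F p (iprod b Ord) \<subseteq> iprod p Op \<longleftrightarrow> x \<in> iprod p Op"
  proof
    assume "x \<in> iprod p Op"
    show "loc F p (iprod b Ord) \<subseteq> iprod p Op"
    proof
      fix y assume "y \<in> loc F p (iprod b Ord)"
      then obtain c where "c \<in> Op" "y = x * c" unfolding bOp setmul_iff by blast
      then show "y \<in> iprod p Op" using iprod_p_right[OF _ \<open>x \<in> iprod p Op\<close>, of c] Op_mult by blast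
    qed
  qed (use x_bOp in blast)
  have c3: "x \<in> iprod p Bp \<longleftrightarrow> x \<in> iprod p Op"
    using key[OF xK] iprod_mono[OF Bp_Op, of p] by blast
  show ?thesis unfolding loc_primitive_def using i1 i2 c1 c2 c3 bOp bp xK by blast
qed

end

theorem lemma2p6:
  fixes F K \<O> b :: "'a::ring_1 set"
  assumes "number_field F"
    and "quaternion_algebra F"
    and "is_order F UNIV \<O>"
    and "maximal_subfield F K"
    and "frac_right_ideal F K (K \<inter> \<O>) b"
    and "b \<subseteq> K \<inter> \<O>"
    and "locally_principal F K (K \<inter> \<O>) b"
  shows "primitive F K (K \<inter> \<O>) b \<longleftrightarrow> primitive F UNIV \<O> (iprod b \<O>)"
proof -
  have cen: "F \<subseteq> center" using assms(2) by (simp add: quaternion_algebra_def)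
  have ord: "Defs.lattice F UNIV \<O>" "1 \<in> \<O>" "\<And>x y. x \<in> \<O> \<Longrightarrow> y \<in> \<O> \<Longrightarrow> x * y \<in> \<O>"
    using assms(3) by (simp_all add: is_order_def)
  have K: "subfield K" "F \<subseteq> K" using assms(4) by (simp_all add: maximal_subfield_def)
  have bl: "Defs.lattice F K b" using assms(5) by (simp add: frac_right_ideal_def)
  interpret S0: setting0 F K \<O> b
    by (rule setting0.intro, rule nf.intro[OF assms(1) cen], rule setting0_axioms.intro)
       (use K ord bl assms(6) in auto)
  have frac: "frac_right_ideal F UNIV \<O> (iprod b \<O>)" by (rule S0.frac_bO)
  have pl: "loc_primitive F K p (K \<inter> \<O>) b \<longleftrightarrow> loc_primitive F UNIV p \<O> (iprod b \<O>)"
    if fp: "finite_place F p" for p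
  proof -
    interpret S: setting F K \<O> b p
      by (rule setting.intro, rule S0.setting0_axioms, rule place.intro, rule S0.nf_axioms,
          rule place_axioms.intro, rule fp)
    obtain x where "x \<in> K" "loc F p b = setmul {x} (loc F p (K \<inter> \<O>))"
      using assms(7) fp unfolding locally_principal_def by blast
    then show ?thesis by (rule S.place_equiv)
  qed
  show ?thesis unfolding primitive_def using assms(5) frac pl by blast
qed

end
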